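(* Let $n\le -9$ be an odd integer with $3\mid n$. Then $$q_{n+2}-q_{n+4}+(w^2-1)\big(q'_{n+2}-q'_{n+4}\big)\equiv 0\pmod 3,$$ i.e. this polynomial in $\mathbb{Z}[w]$ has all coefficients divisible by $3$, where $'$ denotes $d/dw$.
   Context: Define $q_n\in\mathbb{Z}[w]$ for odd $n\le -1$ by $q_{-1}=w^3-w^2+2w-7$, $q_{-3}=w^5-2w^4-2w^3+5w^2+3w-9$, $q_{-5}=w^7-2w^6-4w^5+8w^4+4w^3-7w^2+2w-7$, and $q_n=(w^2-1)(q_{n+2}-q_{n+4})+q_{n+6}$ for odd $n<-5$. *)

theory Defs
  imports "HOL-Computational_Algebra.Polynomial"
begin

text \<open>Q k represents q_{-(2k+1)}.\<close>
fun Q :: "nat \<Rightarrow> int poly" where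
  "Q 0 = [:-7, 2, -1, 1:]"
| "Q (Suc 0) = [:-9, 3, 5, -2, -2, 1:]"
| "Q (Suc (Suc 0)) = [:-7, 2, -7, 4, 8, -4, -2, 1:]"
| "Q (Suc (Suc (Suc k))) =
     [:-1, 0, 1:] * (Q (Suc (Suc k)) - Q (Suc k)) + Q k"

text \<open>q n for odd n \<le> -1 (value for other n is irrelevant).\<close>
definition q :: "int \<Rightarrow> int poly" where
  "q n = Q (nat ((- n - 1) div 2))"

end

theory Submission
  imports Defs
begin

definition LL :: "int poly \<Rightarrow> int poly" where "LL P = P + [:-1,0,1:] * pderiv P"
definition Z :: "int poly \<Rightarrow> bool" where "Z P \<longleftrightarrow> (\<exists>R. P = smult 3 R)"

lemma b0: "Z (LL (Q 3 - Q 2))"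
  unfolding Z_def
  apply (rule exI[of _ "(LL (Q 3 - Q 2)) div [:3:]"])
  by code_simp

lemma b1: "Z (LL (Q 6 - Q 5))"
  unfolding Z_def
  apply (rule exI[of _ "(LL (Q 6 - Q 5)) div [:3:]"])
  by code_simp

lemma s_eq: "[:-2,0,1:]^3 - smult 3 [:-2,0,1:] = ([:-2,0,9,0,-6,0,1:] :: int poly)"
  by code_simp

lemma ps: "pderiv ([:-2,0,9,0,-6,0,1:] :: int poly) = smult 3 [:0,6,0,-8,0,2:]"
  by code_simp

definition D :: "nat \<Rightarrow> int poly" where "D k = Q (Suc k) - Q k"

lemma Q3: "Q (k+3) = [:-1, 0, 1:] * (Q (k+2) - Q (k+1)) + Q k"
  by (simp add: numeral_3_eq_3 eval_nat_numeral)

lemma ring_aux: "(u::'a::comm_ring_1) = A*(z-y)+x \<Longrightarrow> u - z = (A-1)*(z-y) - (y-x)"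
  by (simp add: algebra_simps)

lemma D2: "D (k+2) = [:-2,0,1:] * D (k+1) - D k"
proof -
  have t: "[:-1,0,1:] - 1 = ([:-2,0,1:] :: int poly)" by code_simp
  have "Q (Suc (k+2)) - Q (k+2) = ([:-1,0,1:] - 1) * (Q (k+2) - Q (k+1)) - (Q (k+1) - Q k)"
    by (rule ring_aux) (use Q3[of k] in \<open>simp add: numeral_3_eq_3 del: Q.simps\<close>)
  then show ?thesis unfolding D_def t by (simp del: Q.simps)
qed

lemma ring6: "(d2::'a::comm_ring_1) = t*d1 - d0 \<Longrightarrow> d3 = t*d2 - d1 \<Longrightarrow> d4 = t*d3-d2 \<Longrightarrow>
   d5 = t*d4 - d3 \<Longrightarrow> d6 = t*d5-d4 \<Longrightarrow> d6 = (t^3 - 3*t)*d3 - d0"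
  by (hypsubst, simp add: algebra_simps power3_eq_cube)

lemma D6: "D (k+6) = ([:-2,0,1:]^3 - smult 3 [:-2,0,1:]) * D (k+3) - D k"
proof -
  define t :: "int poly" where "t = [:-2,0,1:]"
  have r: "\<And>m. D (m+2) = t * D (m+1) - D m" using D2 t_def by simp
  have e2: "D (k+2) = t * D(k+1) - D k" using r[of k] by simp
  have e3: "D (k+3) = t * D(k+2) - D (k+1)" using r[of "k+1"] by (simp add: eval_nat_numeral)
  have e4: "D (k+4) = t * D(k+3) - D (k+2)" using r[of "k+2"] by (simp add: eval_nat_numeral)
  have e5: "D (k+5) = t * D(k+4) - D (k+3)" using r[of "k+3"] by (simp add: eval_nat_numeral)
  have e6: "D (k+6) = t * D(k+5) - D (k+4)" using r[of "k+4"] by (simp add: eval_nat_numeral)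
  have "smult 3 t = 3 * t" by (simp add: numeral_poly)
  then show ?thesis unfolding t_def[symmetric]
    using ring6[OF e2 e3 e4 e5 e6] by simp
qed

definition F :: "nat \<Rightarrow> int poly" where "F m = D (3*m+2)"

lemma F2: "F (m+2) = [:-2,0,9,0,-6,0,1:] * F (m+1) - F m"
  using D6[of "3*m+2"] unfolding F_def s_eq by (simp add: algebra_simps)

lemma Z_add: "Z P \<Longrightarrow> Z R \<Longrightarrow> Z (P + R)"
  unfolding Z_def by (metis smult_add_right)
lemma Z_diff: "Z P \<Longrightarrow> Z R \<Longrightarrow> Z (P - R)"
  unfolding Z_def by (metis smult_diff_right)
lemma Z_mult: "Z P \<Longrightarrow> Z (c * P)"
  unfolding Z_def by (metis mult_smult_right)
lemma Z_smult: "Z (smult 3 X)"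
  unfolding Z_def by blast

lemma LL_gen: "pderiv (s::int poly) = smult 3 c \<Longrightarrow>
   (s*X - Y) + A * pderiv (s*X - Y) = s * (X + A * pderiv X) + smult 3 (A*c*X) - (Y + A * pderiv Y)"
  by (simp add: pderiv_mult pderiv_diff algebra_simps)

lemma LL_step: "Z (LL X) \<Longrightarrow> Z (LL Y) \<Longrightarrow> Z (LL ([:-2,0,9,0,-6,0,1:] * X - Y))"
proof -
  assume x: "Z (LL X)" and y: "Z (LL Y)"
  have "LL ([:-2,0,9,0,-6,0,1:] * X - Y) =
        [:-2,0,9,0,-6,0,1:] * LL X + smult 3 ([:-1,0,1:] * [:0,6,0,-8,0,2:] * X) - LL Y"
    unfolding LL_def by (rule LL_gen[OF ps])
  then show ?thesis using x y Z_add Z_diff Z_mult Z_smult by metis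
qed

lemma mainZ: "Z (LL (F m)) \<and> Z (LL (F (Suc m)))"
proof (induction m)
  case 0
  have "F 0 = Q 3 - Q 2" "F 1 = Q 6 - Q 5" unfolding F_def D_def by (simp_all add: eval_nat_numeral)
  then show ?case using b0 b1 by simp
next
  case (Suc m)
  then show ?case using LL_step F2[of m] by (simp add: eval_nat_numeral)
qed

theorem lemma5p2:
  fixes n :: int
  assumes "odd n" and "n \<le> -9" and "3 dvd n"
  shows "\<forall>i. (3::int) dvd coeff (q (n+2) - q (n+4) + [:-1, 0, 1:] * (pderiv (q (n+2)) - pderiv (q (n+4)))) i"
proof -
  have "6 dvd (n + 3)" using assms(1,3) by presburger
  then obtain j where j: "n + 3 = - 6 * j" by (metis dvd_def mult_minus_left mult_minus_right minus_minus)
  have jp: "j \<ge> 1" using j assms(2) by linarith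
  define m where "m = nat (j - 1)"
  have a: "nat ((- (n+2) - 1) div 2) = Suc (3*m+2)" using j jp unfolding m_def by linarith
  have b: "nat ((- (n+4) - 1) div 2) = 3*m+2" using j jp unfolding m_def by linarith
  have e: "q (n+2) - q (n+4) + [:-1, 0, 1:] * (pderiv (q (n+2)) - pderiv (q (n+4))) = LL (F m)"
    unfolding LL_def F_def D_def q_def a b by (simp add: pderiv_diff del: Q.simps)
  obtain R where "LL (F m) = smult 3 R" using mainZ[of m] Z_def by blast
  then show ?thesis unfolding e by simp
qed

end
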